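(* Let $x\in(0,1)$ and let $((a_n,\varepsilon_n))_{n\ge1}$ be an infinite OOCF expansion of $x$. Then for every $n\ge1$, $x$ lies in the closed interval with endpoints $p_n/q_n$ and $p_n''/q_n''$; if $x$ is irrational it lies strictly between them.
   Context: Admissible digits: $D=\{(1,1)\}\cup\{(a,\varepsilon): a\in\mathbb Z,\ a\ge2,\ \varepsilon\in\{-1,1\}\}$. For integers $k\ge1$ put $B(k+1,-1)=\left[\frac{k-1}{k},\frac{2k-1}{2k+1}\right]$ and $B(k,1)=\left[\frac{2k-1}{2k+1},\frac{k}{k+1}\right]$. The OOCF map $T:[0,1]\to[0,1]$ is $T(x)=\frac{kx-(k-1)}{k-(k+1)x}$ for $x\in B(k+1,-1)$, $T(x)=\frac{k-(k+1)x}{kx-(k-1)}$ for $x\in B(k,1)$ ($k\ge1$; formulas agree at common endpoints), and $T(1)=1$. An infinite OOCF expansion of $x\in[0,1]$ is a sequence $((a_n,\varepsilon_n))_{n\ge1}$ in $D$ with $T^{n-1}(x)\in B(a_n,\varepsilon_n)$ and $T^{n-1}(x)\neq1$ for all $n\ge1$. For $n\ge1$, with $M=\begin{pmatrix}1&-1\\1&0\end{pmatrix}$, $J=\begin{pmatrix}2&-1\\1&0\end{pmatrix}$, $E(a,\varepsilon)=\begin{pmatrix}a&\varepsilon\\1&0\end{pmatrix}$, define integers by $M E(a_1,\varepsilon_1) J\cdots J E(a_n,\varepsilon_n) J=\begin{pmatrix}p_n&-p_n'\\ q_n&-q_n'\end{pmatrix}$ and $\begin{pmatrix}p_n''\\ q_n''\end{pmatrix}=M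 E(a_1,\varepsilon_1) J\cdots J E(a_n,\varepsilon_n)\begin{pmatrix}1\\1\end{pmatrix}$. Thus $p_n/q_n$ is the finite continued fraction $1-\cfrac{1}{a_1+\cfrac{\varepsilon_1}{2-\cfrac{1}{\ddots\ \cfrac{\varepsilon_{n-1}}{2-\cfrac{1}{a_n+\varepsilon_n/2}}}}}$ (principal convergent) and $p_n''/q_n''$ is the same with last term $a_n+\varepsilon_n$ (pseudo-convergent). *)

theory Defs
  imports "HOL-Analysis.Analysis"
begin

definition OOCF_digits :: "(int \<times> int) set" where
  "OOCF_digits = {(1,1)} \<union> {(a,e). a \<ge> 2 \<and> (e = -1 \<or> e = 1)}"

definition OOCF_B :: "int \<times> int \<Rightarrow> real set" where
  "OOCF_B d = (case d of (a, e) \<Rightarrow>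
     if e = -1 \<and> a \<ge> 2 then
       (let k = real_of_int (a - 1) in {(k - 1) / k .. (2*k - 1) / (2*k + 1)})
     else if e = 1 \<and> a \<ge> 1 then
       (let k = real_of_int a in {(2*k - 1) / (2*k + 1) .. k / (k + 1)})
     else {})"

definition OOCF_T :: "real \<Rightarrow> real" where
  "OOCF_T x = (if x = 1 then 1 else
     if (\<exists>k::nat. k \<ge> 1 \<and> x \<in> OOCF_B (int k + 1, -1))
     then (let k = real (SOME k::nat. k \<ge> 1 \<and> x \<in> OOCF_B (int k + 1, -1))
           in (k * x - (k - 1)) / (k - (k + 1) * x))
     else (let k = real (SOME k::nat. k \<ge> 1 \<and> x \<in> OOCF_B (int k, 1))
           in (k - (k + 1) * x) / (k * x - (k - 1))))"

definition is_OOCF_expansion :: "real \<Rightarrow> (nat \<Rightarrow> int \<times> int) \<Rightarrow> bool" where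
  "is_OOCF_expansion x d \<longleftrightarrow>
     (\<forall>n\<ge>1. d n \<in> OOCF_digits \<and> (OOCF_T ^^ (n - 1)) x \<in> OOCF_B (d n)
            \<and> (OOCF_T ^^ (n - 1)) x \<noteq> 1)"

text \<open>2x2 integer matrices as ((a,b),(c,d)) = rows.\<close>
type_synonym mat2 = "(int \<times> int) \<times> (int \<times> int)"

definition mmul :: "mat2 \<Rightarrow> mat2 \<Rightarrow> mat2" where
  "mmul A B = (case A of ((a,b),(c,d)) \<Rightarrow> case B of ((e,f),(g,h)) \<Rightarrow>
     ((a*e + b*g, a*f + b*h), (c*e + d*g, c*f + d*h)))"

definition matM :: mat2 where "matM = ((1,-1),(1,0))"
definition matJ :: mat2 where "matJ = ((2,-1),(1,0))"
definition matE :: "int \<times> int \<Rightarrow> mat2" where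
  "matE d = (case d of (a,e) \<Rightarrow> ((a,e),(1,0)))"

fun OOCF_prodJ :: "(nat \<Rightarrow> int \<times> int) \<Rightarrow> nat \<Rightarrow> mat2" where
  "OOCF_prodJ d 0 = matM"
| "OOCF_prodJ d (Suc n) = mmul (mmul (OOCF_prodJ d n) (matE (d (Suc n)))) matJ"

definition OOCF_p :: "(nat \<Rightarrow> int \<times> int) \<Rightarrow> nat \<Rightarrow> int" where
  "OOCF_p d n = fst (fst (OOCF_prodJ d n))"
definition OOCF_q :: "(nat \<Rightarrow> int \<times> int) \<Rightarrow> nat \<Rightarrow> int" where
  "OOCF_q d n = fst (snd (OOCF_prodJ d n))"

text \<open>(p_n'', q_n'') = M E J ... J E(d_n) (1,1)^T.\<close>
definition OOCF_pseudo :: "(nat \<Rightarrow> int \<times> int) \<Rightarrow> nat \<Rightarrow> int \<times> int" where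
  "OOCF_pseudo d n = (case mmul (OOCF_prodJ d (n - 1)) (matE (d n)) of
      ((a,b),(c,e)) \<Rightarrow> (a + b, c + e))"
definition OOCF_p2 :: "(nat \<Rightarrow> int \<times> int) \<Rightarrow> nat \<Rightarrow> int" where
  "OOCF_p2 d n = fst (OOCF_pseudo d n)"
definition OOCF_q2 :: "(nat \<Rightarrow> int \<times> int) \<Rightarrow> nat \<Rightarrow> int" where
  "OOCF_q2 d n = snd (OOCF_pseudo d n)"

end

theory Submission
  imports Defs
begin

lemma B_z:
  assumes "(a,e) \<in> OOCF_digits" "t \<in> OOCF_B (a,e)"
  shows "t < 1 \<and> ((e = -1 \<and> a \<ge> 2 \<and> real_of_int a - 1 \<le> 1/(1-t) \<and> 1/(1-t) \<le> real_of_int a - 1/2)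
     \<or> (e = 1 \<and> a \<ge> 1 \<and> real_of_int a + 1/2 \<le> 1/(1-t) \<and> 1/(1-t) \<le> real_of_int a + 1))"
proof -
  have de: "(e = -1 \<and> a \<ge> 2) \<or> (e = 1 \<and> a \<ge> 1)" using assms(1) unfolding OOCF_digits_def by auto
  then show ?thesis
  proof
    assume h: "e = -1 \<and> a \<ge> 2"
    define k where "k = real_of_int (a - 1)"
    have k1: "k \<ge> 1" using h unfolding k_def by simp
    have t: "(k - 1) / k \<le> t" "t \<le> (2*k - 1) / (2*k + 1)"
      using assms(2) h unfolding OOCF_B_def k_def Let_def by auto
    have "(2*k - 1) / (2*k + 1) < 1" using k1 by (simp add: divide_simps)
    hence t1: "t < 1" using t by linarith
    have "k - 1 \<le> t * k" using t(1) k1 by (simp add: divide_simps)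
    hence z1: "k \<le> 1/(1-t)" using t1 by (simp add: divide_simps) (simp add: algebra_simps)
    have "t * (2*k+1) \<le> 2*k - 1" using t(2) k1 by (simp add: divide_simps)
    hence z2: "1/(1-t) \<le> k + 1/2" using t1 by (simp add: divide_simps) (simp add: algebra_simps)
    show ?thesis using t1 z1 z2 h unfolding k_def by simp
  next
    assume h: "e = 1 \<and> a \<ge> 1"
    define k where "k = real_of_int a"
    have k1: "k \<ge> 1" using h unfolding k_def by simp
    have t: "(2*k - 1) / (2*k + 1) \<le> t" "t \<le> k / (k + 1)"
      using assms(2) h unfolding OOCF_B_def k_def Let_def by auto
    have "k / (k + 1) < 1" using k1 by (simp add: divide_simps)
    hence t1: "t < 1" using t by linarith
    have "2*k - 1 \<le> t * (2*k+1)" using t(1) k1 by (simp add: divide_simps)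
    hence z1: "k + 1/2 \<le> 1/(1-t)" using t1 by (simp add: divide_simps) (simp add: algebra_simps)
    have "t * (k+1) \<le> k" using t(2) k1 by (simp add: divide_simps)
    hence z2: "1/(1-t) \<le> k + 1" using t1 by (simp add: divide_simps) (simp add: algebra_simps)
    show ?thesis using t1 z1 z2 h unfolding k_def by simp
  qed
qed

lemma G_eq:
  assumes "(a,e) \<in> OOCF_digits" "t \<in> OOCF_B (a,e)" "(a',e') \<in> OOCF_digits" "t \<in> OOCF_B (a',e')"
  shows "real_of_int e / (1/(1-t) - real_of_int a) = real_of_int e' / (1/(1-t) - real_of_int a')"
proof -
  define z where "z = 1/(1-t)"
  note A = B_z[OF assms(1,2), folded z_def] and B = B_z[OF assms(3,4), folded z_def]
  have intle: "\<And>m n::int. real_of_int m < real_of_int n + 1 \<Longrightarrow> m \<le> n" by linarith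
  have "real_of_int e / (z - real_of_int a) = real_of_int e' / (z - real_of_int a')"
  proof (cases "e = -1")
    case e: True
    show ?thesis
    proof (cases "e' = -1")
      case True
      with A B e have "a \<le> a'" "a' \<le> a" by (auto intro!: intle)
      thus ?thesis using e True by simp
    next
      case False
      with A B e have h: "e' = 1" "a - 1 \<le> z" "z \<le> a - 1/2" "a' + 1/2 \<le> z" "z \<le> a' + 1" by auto
      have "a' + 1 \<le> a" using h by (auto intro!: intle)
      moreover have "a \<le> a' + 2" using h by (auto intro!: intle)
      ultimately consider "a = a' + 1" | "a = a' + 2" by linarith
      thus ?thesis
      proof cases
        case 1
        hence zz: "z = a' + 1/2" using h by simp
        show ?thesis unfolding zz using 1 h e by simp
      next
        case 2
        hence zz: "z = a' + 1" using h by simp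
        show ?thesis unfolding zz using 2 h e by simp
      qed
    qed
  next
    case e: False
    show ?thesis
    proof (cases "e' = -1")
      case False
      with A B e have "a \<le> a'" "a' \<le> a" by (auto intro!: intle)
      thus ?thesis using A B e False by auto
    next
      case True
      with A B e have h: "e = 1" "a' - 1 \<le> z" "z \<le> a' - 1/2" "a + 1/2 \<le> z" "z \<le> a + 1" by auto
      have "a + 1 \<le> a'" using h by (auto intro!: intle)
      moreover have "a' \<le> a + 2" using h by (auto intro!: intle)
      ultimately consider "a' = a + 1" | "a' = a + 2" by linarith
      thus ?thesis
      proof cases
        case 1
        hence zz: "z = a + 1/2" using h by simp
        show ?thesis unfolding zz using 1 h True by simp
      next
        case 2
        hence zz: "z = a + 1" using h by simp
        show ?thesis unfolding zz using 2 h True by simp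
      qed
    qed
  qed
  thus ?thesis by (simp add: z_def)
qed

lemma T_G:
  assumes "(a,e) \<in> OOCF_digits" "t \<in> OOCF_B (a,e)"
  shows "OOCF_T t = real_of_int e / (1/(1-t) - real_of_int a) - 1"
proof -
  define z where "z = 1/(1-t)"
  have t1: "t < 1" using B_z[OF assms] by simp
  have zt: "z * (1 - t) = 1" using t1 unfolding z_def by simp
  show ?thesis
  proof (cases "\<exists>k::nat. k \<ge> 1 \<and> t \<in> OOCF_B (int k + 1, -1)")
    case True
    define k where "k = (SOME k::nat. k \<ge> 1 \<and> t \<in> OOCF_B (int k + 1, -1))"
    have k: "k \<ge> 1" "t \<in> OOCF_B (int k + 1, -1)" using someI_ex[OF True] unfolding k_def by auto
    have dk: "(int k + 1, -1) \<in> OOCF_digits" using k unfolding OOCF_digits_def by auto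
    have zb: "real k \<le> z" "z \<le> real k + 1/2" using B_z[OF dk k(2), folded z_def] by auto
    have T: "OOCF_T t = (real k * t - (real k - 1)) / (real k - (real k + 1) * t)"
      using True t1 unfolding OOCF_T_def k_def Let_def by auto
    have G: "real_of_int e / (z - real_of_int a) = -1 / (z - (real k + 1))"
      using G_eq[OF assms dk k(2), folded z_def] by simp
    have nz: "z - (real k + 1) \<noteq> 0" using zb by simp
    have zp: "z > 0" using zb k by simp
    have tz: "t = 1 - 1/z" using zt zp by (auto simp: field_simps)
    have n1: "real k * t - (real k - 1) = (z - real k) / z" unfolding tz using zp by (simp add: field_simps)
    have d1: "real k - (real k + 1) * t = (real k + 1 - z) / z" unfolding tz using zp by (simp add: field_simps)
    have nz2: "real k + 1 - z \<noteq> 0" using nz by simp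
    have "(real k * t - (real k - 1)) / (real k - (real k + 1) * t) = (z - real k) / (real k + 1 - z)"
      unfolding n1 d1 using zp nz2 by simp
    also have "\<dots> = -1 / (z - (real k + 1)) - 1" using nz nz2 by (simp add: field_simps)
    finally have "(real k * t - (real k - 1)) / (real k - (real k + 1) * t) = -1 / (z - (real k + 1)) - 1" .
    thus ?thesis using T G unfolding z_def by simp
  next
    case False
    have e: "e = 1 \<and> a \<ge> 1"
    proof (rule ccontr)
      assume "\<not> (e = 1 \<and> a \<ge> 1)"
      hence "e = -1 \<and> a \<ge> 2" using assms(1) unfolding OOCF_digits_def by auto
      hence "nat (a - 1) \<ge> 1 \<and> t \<in> OOCF_B (int (nat (a - 1)) + 1, -1)" using assms(2) by (auto simp: nat_le_iff)
      thus False using False by blast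
    qed
    have Ex: "\<exists>k::nat. k \<ge> 1 \<and> t \<in> OOCF_B (int k, 1)"
      using e assms(2) by (intro exI[of _ "nat a"]) (auto simp: nat_le_iff)
    define k where "k = (SOME k::nat. k \<ge> 1 \<and> t \<in> OOCF_B (int k, 1))"
    have k: "k \<ge> 1" "t \<in> OOCF_B (int k, 1)" using someI_ex[OF Ex] unfolding k_def by auto
    have dk: "(int k, 1) \<in> OOCF_digits" using k unfolding OOCF_digits_def by auto
    have zb: "real k + 1/2 \<le> z" "z \<le> real k + 1" using B_z[OF dk k(2), folded z_def] by auto
    have T: "OOCF_T t = (real k - (real k + 1) * t) / (real k * t - (real k - 1))"
      using False t1 unfolding OOCF_T_def k_def Let_def by auto
    have G: "real_of_int e / (z - real_of_int a) = 1 / (z - real k)"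
      using G_eq[OF assms dk k(2), folded z_def] by simp
    have nz: "z - real k \<noteq> 0" using zb by simp
    have zp: "z > 0" using zb k by simp
    have tz: "t = 1 - 1/z" using zt zp by (auto simp: field_simps)
    have n1: "real k * t - (real k - 1) = (z - real k) / z" unfolding tz using zp by (simp add: field_simps)
    have d1: "real k - (real k + 1) * t = (real k + 1 - z) / z" unfolding tz using zp by (simp add: field_simps)
    have "(real k - (real k + 1) * t) / (real k * t - (real k - 1)) = (real k + 1 - z) / (z - real k)"
      unfolding n1 d1 using zp nz by simp
    also have "\<dots> = 1 / (z - real k) - 1" using nz by (simp add: field_simps)
    finally have "(real k - (real k + 1) * t) / (real k * t - (real k - 1)) = 1 / (z - real k) - 1" .
    thus ?thesis using T G unfolding z_def by simp
  qed
qed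

lemma inv_bnd: "1/2 \<le> c \<Longrightarrow> c \<le> 1 \<Longrightarrow> 1 \<le> 1/c \<and> 1/c \<le> (2::real)"
  by (simp add: divide_simps)

lemma T_step:
  assumes "(a,e) \<in> OOCF_digits" "t \<in> OOCF_B (a,e)"
  shows "0 \<le> OOCF_T t \<and> OOCF_T t \<le> 1 \<and>
    t * (real_of_int a * (1 + OOCF_T t) + real_of_int e) = (real_of_int a - 1) * (1 + OOCF_T t) + real_of_int e"
proof -
  define z where "z = 1/(1-t)"
  define w where "w = 1 + OOCF_T t"
  have Bz: "t < 1" "(e = -1 \<and> a \<ge> 2 \<and> real_of_int a - 1 \<le> z \<and> z \<le> real_of_int a - 1/2)
     \<or> (e = 1 \<and> a \<ge> 1 \<and> real_of_int a + 1/2 \<le> z \<and> z \<le> real_of_int a + 1)"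
    using B_z[OF assms] unfolding z_def by auto
  have w: "w = real_of_int e / (z - real_of_int a)" using T_G[OF assms] unfolding w_def z_def by simp
  have za: "z - real_of_int a \<noteq> 0" using Bz(2) by auto
  have wz: "w * (z - real_of_int a) = real_of_int e" using w za by simp
  have zt: "z * (1 - t) = 1" using Bz(1) unfolding z_def by simp
  have wb: "1 \<le> w \<and> w \<le> 2"
  proof (cases "e = -1")
    case True
    hence h: "-1 \<le> z - real_of_int a" "z - real_of_int a \<le> -1/2" using Bz(2) by auto
    have "w = 1 / (real_of_int a - z)" using wz True za by (simp add: divide_simps) (simp add: algebra_simps)
    moreover have "1/2 \<le> real_of_int a - z" "real_of_int a - z \<le> 1" using h by auto
    ultimately show ?thesis using inv_bnd by metis
  next
    case False
    hence h: "e = 1" "1/2 \<le> z - real_of_int a" "z - real_of_int a \<le> 1" using Bz(2) by auto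
    have "w = 1 / (z - real_of_int a)" using w h by simp
    thus ?thesis using h inv_bnd by metis
  qed
  have "real_of_int a * w + real_of_int e = z * w" using wz by (simp add: algebra_simps)
  moreover have "t * (z * w) = (real_of_int a - 1) * w + real_of_int e"
  proof -
    have tz: "t * z = z - 1" using zt by (simp add: algebra_simps)
    have "t * (z * w) = (t * z) * w" by (simp add: mult.assoc)
    also have "\<dots> = z * w - w" unfolding tz by (simp add: algebra_simps)
    also have "\<dots> = (real_of_int a - 1) * w + real_of_int e" using wz by (simp add: algebra_simps)
    finally show ?thesis .
  qed
  ultimately show ?thesis using wb unfolding w_def by simp
qed

definition "PP d m = fst (fst (OOCF_prodJ d m))"
definition "PP2 d m = snd (fst (OOCF_prodJ d m))"
definition "QQ d m = fst (snd (OOCF_prodJ d m))"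
definition "QQ2 d m = snd (snd (OOCF_prodJ d m))"

lemma rec_Suc:
  assumes "d (Suc m) = (a, e)"
  shows "PP d (Suc m) = 2 * (PP d m * a + PP2 d m) + PP d m * e"
    "PP2 d (Suc m) = - (PP d m * a + PP2 d m)"
    "QQ d (Suc m) = 2 * (QQ d m * a + QQ2 d m) + QQ d m * e"
    "QQ2 d (Suc m) = - (QQ d m * a + QQ2 d m)"
  using assms unfolding PP_def PP2_def QQ_def QQ2_def
  by (auto simp: mmul_def matE_def matJ_def split: prod.splits)

lemma base0: "PP d 0 = 1" "PP2 d 0 = -1" "QQ d 0 = 1" "QQ2 d 0 = 0"
  unfolding PP_def PP2_def QQ_def QQ2_def by (auto simp: matM_def)

lemma inv:
  assumes "0 \<le> x" "x \<le> 1"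
    "\<forall>j. 1 \<le> j \<and> j \<le> m \<longrightarrow> d j \<in> OOCF_digits \<and> (OOCF_T^^(j-1)) x \<in> OOCF_B (d j)"
  shows "QQ d m + QQ2 d m \<ge> 1 \<and> QQ2 d m \<le> 0 \<and> 0 \<le> (OOCF_T^^m) x \<and> (OOCF_T^^m) x \<le> 1 \<and>
    x * (real_of_int (QQ d m + QQ2 d m) - real_of_int (QQ2 d m) * (OOCF_T^^m) x)
      = real_of_int (PP d m + PP2 d m) - real_of_int (PP2 d m) * (OOCF_T^^m) x"
  using assms(3)
proof (induction m)
  case 0
  show ?case using assms(1,2) by (simp add: base0)
next
  case (Suc m)
  obtain a e where de: "d (Suc m) = (a, e)" by fastforce
  define t where "t = (OOCF_T^^m) x"
  define s where "s = OOCF_T t"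
  have sS: "(OOCF_T^^Suc m) x = s" unfolding s_def t_def by simp
  have IH: "QQ d m + QQ2 d m \<ge> 1 \<and> QQ2 d m \<le> 0 \<and> 0 \<le> t \<and> t \<le> 1 \<and>
    x * (real_of_int (QQ d m + QQ2 d m) - real_of_int (QQ2 d m) * t)
      = real_of_int (PP d m + PP2 d m) - real_of_int (PP2 d m) * t"
  proof -
    have "\<forall>j. 1 \<le> j \<and> j \<le> m \<longrightarrow> d j \<in> OOCF_digits \<and> (OOCF_T^^(j-1)) x \<in> OOCF_B (d j)"
      using Suc.prems le_SucI by blast
    from Suc.IH[OF this] show ?thesis unfolding t_def .
  qed
  have "d (Suc m) \<in> OOCF_digits \<and> (OOCF_T^^(Suc m - 1)) x \<in> OOCF_B (d (Suc m))"
    using Suc.prems[rule_format, of "Suc m"] by simp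
  hence dig: "(a,e) \<in> OOCF_digits" "t \<in> OOCF_B (a,e)" using de unfolding t_def by auto
  have ae: "a + e \<ge> 1" "a \<ge> 1" using dig(1) unfolding OOCF_digits_def by auto
  note st = T_step[OF dig, folded s_def]
  define Q where "Q = QQ d m"
  define Q2 where "Q2 = QQ2 d m"
  define P where "P = PP d m"
  define P2 where "P2 = PP2 d m"
  note R = rec_Suc[of d m a e, OF de, folded Q_def Q2_def P_def P2_def]
  have r1: "Q + Q2 \<ge> 1" "Q2 \<le> 0" using IH unfolding Q_def Q2_def by auto
  have n1: "QQ d (Suc m) + QQ2 d (Suc m) = (a+e-1)*(Q+Q2) + (Q+Q2) + (a+e-1)*(-Q2)"
    unfolding R by (simp add: algebra_simps)
  have "(a+e-1)*(Q+Q2) \<ge> 0" using r1 ae by (intro mult_nonneg_nonneg) linarith+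
  moreover have "(a+e-1)*(-Q2) \<ge> 0" using r1 ae by (intro mult_nonneg_nonneg) linarith+
  ultimately
  have c1: "QQ d (Suc m) + QQ2 d (Suc m) \<ge> 1" unfolding n1 using r1 by linarith
  have n2: "QQ2 d (Suc m) = - (a*(Q+Q2) + (a-1)*(-Q2))" unfolding R by (simp add: algebra_simps)
  have "a*(Q+Q2) \<ge> 0" using r1 ae by (intro mult_nonneg_nonneg) linarith+
  moreover have "(a-1)*(-Q2) \<ge> 0" using r1 ae by (intro mult_nonneg_nonneg) linarith+
  ultimately
  have c2: "QQ2 d (Suc m) \<le> 0" unfolding n2 by linarith
  define D where "D = real_of_int a * (1 + s) + real_of_int e"
  have tD: "t * D = (real_of_int a - 1) * (1 + s) + real_of_int e" using st unfolding D_def by simp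
  have eqQ: "real_of_int (QQ d (Suc m) + QQ2 d (Suc m)) - real_of_int (QQ2 d (Suc m)) * s
      = (real_of_int (Q + Q2) - real_of_int Q2 * t) * D"
  proof -
    have "(real_of_int (Q + Q2) - real_of_int Q2 * t) * D = real_of_int (Q + Q2) * D - real_of_int Q2 * (t * D)"
      by (simp add: algebra_simps)
    also have "\<dots> = real_of_int (QQ d (Suc m) + QQ2 d (Suc m)) - real_of_int (QQ2 d (Suc m)) * s"
      unfolding tD unfolding R D_def by (simp add: algebra_simps)
    finally show ?thesis by simp
  qed
  have eqP: "real_of_int (PP d (Suc m) + PP2 d (Suc m)) - real_of_int (PP2 d (Suc m)) * s
      = (real_of_int (P + P2) - real_of_int P2 * t) * D"
  proof -
    have "(real_of_int (P + P2) - real_of_int P2 * t) * D = real_of_int (P + P2) * D - real_of_int P2 * (t * D)"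
      by (simp add: algebra_simps)
    also have "\<dots> = real_of_int (PP d (Suc m) + PP2 d (Suc m)) - real_of_int (PP2 d (Suc m)) * s"
      unfolding tD unfolding R D_def by (simp add: algebra_simps)
    finally show ?thesis by simp
  qed
  have rel: "x * (real_of_int (Q + Q2) - real_of_int Q2 * t) = real_of_int (P + P2) - real_of_int P2 * t"
    using IH unfolding Q_def Q2_def P_def P2_def by simp
  have "x * (real_of_int (QQ d (Suc m) + QQ2 d (Suc m)) - real_of_int (QQ2 d (Suc m)) * s)
      = real_of_int (PP d (Suc m) + PP2 d (Suc m)) - real_of_int (PP2 d (Suc m)) * s"
    unfolding eqQ eqP using rel by (metis mult.assoc)
  thus ?case using c1 c2 st sS by simp
qed

lemma pseudo_eq:
  "OOCF_p2 d (Suc m) = PP d (Suc m) + PP2 d (Suc m)"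
  "OOCF_q2 d (Suc m) = QQ d (Suc m) + QQ2 d (Suc m)"
proof -
  obtain a e where de: "d (Suc m) = (a, e)" by fastforce
  note R = rec_Suc[of d m a e, OF de]
  show "OOCF_p2 d (Suc m) = PP d (Suc m) + PP2 d (Suc m)" unfolding R
    using de unfolding OOCF_p2_def OOCF_pseudo_def PP_def PP2_def
    by (auto simp: mmul_def matE_def split: prod.splits)
  show "OOCF_q2 d (Suc m) = QQ d (Suc m) + QQ2 d (Suc m)" unfolding R
    using de unfolding OOCF_q2_def OOCF_pseudo_def QQ_def QQ2_def
    by (auto simp: mmul_def matE_def split: prod.splits)
qed

lemma between:
  fixes A B C D x y :: real
  assumes "C > 0" "D \<ge> 0" "0 \<le> y" "y \<le> 1" "x * (C + D * y) = A + B * y"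
  shows "min (A/C) ((A+B)/(C+D)) \<le> x \<and> x \<le> max (A/C) ((A+B)/(C+D))"
proof -
  define K where "K = B * C - A * D"
  have pos: "C + D * y > 0" using assms by (simp add: add_pos_nonneg)
  have pos2: "C + D > 0" using assms by simp
  have e1: "(x * C - A) * (C + D * y) = y * K"
  proof -
    have "(x * C - A) * (C + D * y) = C * (x * (C + D * y)) - A * (C + D * y)" by (simp add: algebra_simps)
    also have "\<dots> = y * K" unfolding assms(5) K_def by (simp add: algebra_simps)
    finally show ?thesis .
  qed
  have e2: "((A + B) - x * (C + D)) * (C + D * y) = (1 - y) * K"
  proof -
    have "((A + B) - x * (C + D)) * (C + D * y) = (A + B) * (C + D * y) - (C + D) * (x * (C + D * y))"
      by (simp add: algebra_simps)
    also have "\<dots> = (1 - y) * K" unfolding assms(5) K_def by (simp add: algebra_simps)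
    finally show ?thesis .
  qed
  have sg: "\<And>u v. u * (C + D * y) = v \<Longrightarrow> (0 \<le> v \<longleftrightarrow> 0 \<le> u)"
    using pos by (auto simp: zero_le_mult_iff)
  have l1: "A / C \<le> x \<longleftrightarrow> 0 \<le> x * C - A" using assms(1) by (simp add: divide_simps)
  have l2: "x \<le> (A+B)/(C+D) \<longleftrightarrow> 0 \<le> (A + B) - x * (C + D)" using pos2 by (simp add: divide_simps)
  have l3: "x \<le> A / C \<longleftrightarrow> 0 \<le> -(x * C - A)" using assms(1) by (simp add: divide_simps)
  have l4: "(A+B)/(C+D) \<le> x \<longleftrightarrow> 0 \<le> -((A + B) - x * (C + D))" using pos2 by (simp add: divide_simps)
  show ?thesis
  proof (cases "K \<ge> 0")
    case True
    have "0 \<le> x * C - A" using sg[OF e1] True assms(3) by simp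
    moreover have "0 \<le> (A + B) - x * (C + D)" using sg[OF e2] True assms(4) by simp
    ultimately show ?thesis using l1 l2 by linarith
  next
    case False
    have "-(x * C - A) * (C + D * y) = y * (-K)" using e1 by (simp add: algebra_simps)
    hence "0 \<le> -(x * C - A)" using sg False assms(3) by (metis mult_nonneg_nonneg neg_0_le_iff_le linorder_linear)
    moreover have "-((A + B) - x * (C + D)) * (C + D * y) = (1 - y) * (-K)" using e2 by (simp add: algebra_simps)
    hence "0 \<le> -((A + B) - x * (C + D))" using sg False assms(4) by (metis mult_nonneg_nonneg diff_ge_0_iff_ge neg_0_le_iff_le linorder_linear)
    ultimately show ?thesis using l3 l4 by linarith
  qed
qed

theorem lemma3p5:
  fixes x :: real and d :: "nat \<Rightarrow> int \<times> int" and n :: nat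
  assumes "0 < x" "x < 1" "is_OOCF_expansion x d" "n \<ge> 1"
  defines "u \<equiv> real_of_int (OOCF_p d n) / real_of_int (OOCF_q d n)"
      and "v \<equiv> real_of_int (OOCF_p2 d n) / real_of_int (OOCF_q2 d n)"
  shows "(min u v \<le> x \<and> x \<le> max u v) \<and>
         (x \<notin> \<rat> \<longrightarrow> min u v < x \<and> x < max u v)"
proof -
  obtain m where n: "n = Suc m" using assms(4) by (cases n) auto
  have hyp: "\<forall>j. 1 \<le> j \<and> j \<le> n \<longrightarrow> d j \<in> OOCF_digits \<and> (OOCF_T^^(j-1)) x \<in> OOCF_B (d j)"
    using assms(3) unfolding is_OOCF_expansion_def by blast
  define y where "y = (OOCF_T^^n) x"
  have I: "QQ d n + QQ2 d n \<ge> 1 \<and> QQ2 d n \<le> 0 \<and> 0 \<le> y \<and> y \<le> 1 \<and>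
    x * (real_of_int (QQ d n + QQ2 d n) - real_of_int (QQ2 d n) * y)
      = real_of_int (PP d n + PP2 d n) - real_of_int (PP2 d n) * y"
    using inv[of x m d] hyp assms(1,2) unfolding y_def
    using inv[of x n d] by auto
  define A where "A = real_of_int (PP d n + PP2 d n)"
  define B where "B = - real_of_int (PP2 d n)"
  define C where "C = real_of_int (QQ d n + QQ2 d n)"
  define D where "D = - real_of_int (QQ2 d n)"
  have C: "C > 0" "D \<ge> 0" using I unfolding C_def D_def by auto
  have rel: "x * (C + D * y) = A + B * y" using I unfolding A_def B_def C_def D_def by simp
  have vv: "v = A / C" unfolding v_def A_def C_def n pseudo_eq by simp
  have uu: "u = (A + B) / (C + D)" unfolding u_def A_def B_def C_def D_def OOCF_p_def OOCF_q_def PP_def QQ_def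
    by simp
  have main: "min u v \<le> x \<and> x \<le> max u v"
    using between[OF C(1,2) _ _ rel] I unfolding uu vv by (auto simp: min.commute max.commute)
  have uQ: "u \<in> \<rat>" "v \<in> \<rat>" unfolding u_def v_def by (auto intro: Rats_divide)
  have "x \<notin> \<rat> \<longrightarrow> min u v < x \<and> x < max u v"
  proof
    assume "x \<notin> \<rat>"
    hence "x \<noteq> u" "x \<noteq> v" using uQ by auto
    thus "min u v < x \<and> x < max u v" using main by (auto simp: min_def max_def split: if_splits)
  qed
  thus ?thesis using main by blast
qed

end
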